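(* Let $T_1,T_2,\dots$ be independent random variables with $T_i\sim\mathrm{Geometric}(p_i)$, $p_i=(n-i+1)/n$ (i.e. $P(T_i=k)=p_i(1-p_i)^{k-1}$ for $k\ge1$). For any $u>0$ and $\eta\in(0,u)$ there are positive constants $\Delta_2$ and $\beta=\beta(u,\eta)$ such that for all large enough $n$ and all $m<\beta n$, $$P\left(T_1+T_2+\cdots+T_{\lfloor(u-\eta)m\rfloor}>um\right)\le\exp\big[-\eta m\log(n/m)+\Delta_2 m\big].$$ Moreover, $\beta(u,\eta)\downarrow0$ as $\eta\downarrow0$, and for fixed $\eta$, $\beta(u,\eta)$ is a decreasing function of $u$. *)

theory Defs
  imports "HOL-Probability.Probability"
begin

text \<open>Geometric distribution on {1,2,...}: P(T = k) = p (1-p)^(k-1) for k \<ge> 1.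
  The library's geometric_pmf counts failures (support from 0), so shift by one.\<close>
definition geom1_pmf :: "real \<Rightarrow> nat pmf" where
  "geom1_pmf p = map_pmf Suc (geometric_pmf p)"

definition coupon_p :: "nat \<Rightarrow> nat \<Rightarrow> real" where
  "coupon_p n i = (real n - real i + 1) / real n"

definition sumT_pmf :: "nat \<Rightarrow> nat \<Rightarrow> nat pmf" where
  "sumT_pmf n k = map_pmf (\<lambda>T. \<Sum>i\<in>{1..k}. T i)
                          (Pi_pmf {1..k} 0 (\<lambda>i. geom1_pmf (coupon_p n i)))"

end

theory Submission imports Defs begin

lemma geom_mgf:
  fixes p z :: real
  assumes p: "0 < p" "p \<le> 1" and z: "0 \<le> z" and q: "(1 - p) * z \<le> 1/2"
  shows "(\<integral>\<^sup>+x. ennreal (z ^ x) \<partial>geom1_pmf p) \<le> ennreal (2 * z)"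
proof -
  have "(\<integral>\<^sup>+x. ennreal (z ^ x) \<partial>geom1_pmf p) = (\<integral>\<^sup>+j. ennreal (z ^ Suc j) \<partial>geometric_pmf p)"
    by (simp add: geom1_pmf_def)
  also have "\<dots> = (\<integral>\<^sup>+j. ennreal (pmf (geometric_pmf p) j) * ennreal (z ^ Suc j) \<partial>count_space UNIV)"
    by (rule nn_integral_measure_pmf)
  also have "\<dots> = (\<Sum>j. ennreal ((p * z) * ((1 - p) * z) ^ j))"
    using p z by (simp add: nn_integral_count_space_nat ennreal_mult''[symmetric] power_mult_distrib mult_ac)
  also have "\<dots> = ennreal ((p * z) * (1 / (1 - (1 - p) * z)))"
    using p z q by (intro suminf_ennreal_eq sums_mult geometric_sums) auto
  also have "\<dots> \<le> ennreal (2 * z)"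
  proof (intro ennreal_leI)
    have "1 - (1 - p) * z \<ge> 1/2" using q by simp
    hence "1 / (1 - (1 - p) * z) \<le> 2" by (simp add: field_simps)
    hence "(p * z) * (1 / (1 - (1 - p) * z)) \<le> (p*z) * 2"
      using p z by (intro mult_left_mono) auto
    also have "\<dots> \<le> 2 * z" using p z using mult_left_le_one_le[of z p] by simp
    finally show "(p * z) * (1 / (1 - (1 - p) * z)) \<le> 2 * z" .
  qed
  finally show ?thesis .
qed

lemma sumT_mgf:
  fixes n k :: nat and z :: real
  assumes k: "1 \<le> k" "2 * k < n" and zdef: "z = real n / (2 * real k)"
  shows "(\<integral>\<^sup>+s. ennreal (z ^ s) \<partial>sumT_pmf n k) \<le> ennreal ((2 * z) ^ k)"
proof -
  have z0: "0 \<le> z" using zdef by simp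
  have "(\<integral>\<^sup>+s. ennreal (z ^ s) \<partial>sumT_pmf n k)
      = (\<integral>\<^sup>+T. (\<Prod>i\<in>{1..k}. ennreal (z ^ T i)) \<partial>Pi_pmf {1..k} 0 (\<lambda>i. geom1_pmf (coupon_p n i)))"
    using z0 by (simp add: sumT_pmf_def power_sum prod_ennreal)
  also have "\<dots> = (\<Prod>i\<in>{1..k}. (\<integral>\<^sup>+x. ennreal (z ^ x) \<partial>geom1_pmf (coupon_p n i)))"
    by (rule nn_integral_prod_Pi_pmf) simp
  also have "\<dots> \<le> (\<Prod>i\<in>{1..k}. ennreal (2 * z))"
  proof (intro prod_mono_ennreal)
    fix i assume i: "i \<in> {1..k}"
    have n0: "real n > 0" using k by simp
    have "real i < real n" using i k by simp
    hence p1: "0 < coupon_p n i" using n0 by (simp add: coupon_p_def)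
    have p2: "coupon_p n i \<le> 1" using i n0 by (simp add: coupon_p_def field_simps)
    have "(1 - coupon_p n i) * z = (real i - 1) / (2 * real k)"
      using n0 k by (simp add: coupon_p_def zdef field_simps)
    also have "\<dots> \<le> 1/2" using i k by (simp add: field_simps)
    finally have "(1 - coupon_p n i) * z \<le> 1/2" .
    thus "(\<integral>\<^sup>+x. ennreal (z ^ x) \<partial>geom1_pmf (coupon_p n i)) \<le> ennreal (2 * z)"
      using geom_mgf p1 p2 z0 by blast
  qed
  also have "\<dots> = ennreal ((2 * z) ^ k)"
    using z0 by (simp add: ennreal_power)
  finally show ?thesis .
qed

lemma sumT_tail:
  fixes n k :: nat and z t :: real
  assumes k: "1 \<le> k" "2 * k < n" and zdef: "z = real n / (2 * real k)" and t: "0 \<le> t"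
  shows "measure_pmf.prob (sumT_pmf n k) {s. real s > t} \<le> (2 * z) ^ k / z powr t"
proof -
  have "real (2 * k) < real n" using k(2) by linarith
  moreover have kp: "0 < 2 * real k" using k(1) by simp
  ultimately have z1: "1 < z" unfolding zdef by (simp add: less_divide_eq)
  let ?M = "sumT_pmf n k"
  have "emeasure ?M {s. real s > t} = (\<integral>\<^sup>+s. indicator {s. real s > t} s \<partial>?M)"
    by simp
  also have "\<dots> \<le> (\<integral>\<^sup>+s. ennreal (z ^ s) * ennreal (1 / z powr t) \<partial>?M)"
  proof (intro nn_integral_mono)
    fix s :: nat
    show "indicator {s. real s > t} s \<le> ennreal (z ^ s) * ennreal (1 / z powr t)"
    proof (cases "real s > t")
      case True
      have "z powr t \<le> z powr real s" using z1 True by (intro powr_mono) auto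
      also have "\<dots> = z ^ s" using z1 by (simp add: powr_realpow)
      finally have le: "z powr t \<le> z ^ s" .
      have zp: "0 < z powr t" using z1 by simp
      have "1 \<le> z ^ s * (1 / z powr t)" using le zp by (simp add: le_divide_eq)
      hence A: "ennreal 1 \<le> ennreal (z ^ s * (1 / z powr t))" by (rule ennreal_leI)
      have B: "ennreal (z ^ s * (1 / z powr t)) = ennreal (z ^ s) * ennreal (1 / z powr t)"
        using z1 zp by (intro ennreal_mult) auto
      have "1 \<le> ennreal (z ^ s) * ennreal (1 / z powr t)" using A B by (metis ennreal_1)
      thus ?thesis using True by simp
    qed simp
  qed
  also have "\<dots> = (\<integral>\<^sup>+s. ennreal (z ^ s) \<partial>?M) * ennreal (1 / z powr t)"
    by (rule nn_integral_multc) simp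
  also have "\<dots> \<le> ennreal ((2 * z) ^ k) * ennreal (1 / z powr t)"
    by (intro mult_right_mono sumT_mgf[OF k zdef]) simp
  also have "\<dots> = ennreal ((2 * z) ^ k / z powr t)"
    using z1 by (simp add: ennreal_mult''[symmetric])
  finally have "emeasure ?M {s. real s > t} \<le> ennreal ((2 * z) ^ k / z powr t)" .
  thus ?thesis using z1
    by (simp add: measure_pmf.emeasure_eq_measure ennreal_le_iff)
qed

lemma real_bound:
  fixes u \<eta> z :: real and n m k :: nat
  assumes e: "0 < \<eta>" "\<eta> < u" and k: "1 \<le> k" "2 * k < n" "real k \<le> (u - \<eta>) * real m"
    and zdef: "z = real n / (2 * real k)"
  shows "(2 * z) ^ k / z powr (u * real m)
     \<le> exp (- \<eta> * real m * ln (real n / real m) + (u * ln 2 + \<eta> * \<bar>ln (2 * u)\<bar> + 1) * real m)"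
proof -
  have "real (2 * k) < real n" using k(2) by linarith
  moreover have kp: "0 < 2 * real k" using k(1) by simp
  ultimately have z1: "1 < z" unfolding zdef by (simp add: less_divide_eq)
  have m0: "0 < real m"
  proof (rule ccontr)
    assume "\<not> 0 < real m" hence "real m = 0" by simp
    thus False using k(1,3) by simp
  qed
  have n0: "0 < real n" using k by simp
  have "(2 * z) ^ k = exp (real k * (ln 2 + ln z))"
    using z1 by (simp add: powr_realpow[symmetric] powr_def distrib_left exp_add)
  moreover have "z powr (u * real m) = exp (u * real m * ln z)"
    using z1 by (simp add: powr_def)
  ultimately have eq: "(2 * z) ^ k / z powr (u * real m) = exp (real k * (ln 2 + ln z) - u * real m * ln z)"
    by (simp add: exp_diff)
  have l2z: "ln (2 * z) = ln 2 + ln z" using z1 by (simp add: ln_mult)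
  have lz0: "0 \<le> ln z" using z1 by simp
  have H2: "\<eta> * real m \<le> u * real m - real k" using k(3) by (simp add: algebra_simps)
  have lz: "ln z = ln (real n) - ln (2 * real k)" using n0 kp zdef by (simp add: ln_div)
  have "(u - \<eta>) * real m \<le> u * real m" using e m0 by (intro mult_right_mono) auto
  hence kum: "real k \<le> u * real m" using k(3) by linarith
  hence "2 * real k \<le> 2 * u * real m" by linarith
  hence "ln (2 * real k) \<le> ln (2 * u * real m)" using kp by simp
  also have "\<dots> = ln (2 * u) + ln (real m)" using e m0 by (simp add: ln_mult)
  finally have H3: "ln n - ln (2 * u) - ln m \<le> ln z" using lz by simp
  have H4: "ln (real n / real m) = ln n - ln m" using n0 m0 by (simp add: ln_div)
  have "real k * (ln 2 + ln z) - u * real m * ln z = real k * ln 2 - (u * real m - real k) * ln z"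
    by (simp add: algebra_simps)
  also have "\<dots> \<le> real k * ln 2 - (\<eta> * real m) * ln z"
    using H2 lz0 by (simp add: mult_right_mono)
  also have "\<dots> \<le> u * real m * ln 2 - (\<eta> * real m) * (ln n - ln (2 * u) - ln m)"
  proof -
    have "real k * ln 2 \<le> u * real m * ln 2" using kum by (intro mult_right_mono) auto
    moreover have "(\<eta> * real m) * (ln n - ln (2 * u) - ln m) \<le> (\<eta> * real m) * ln z"
      using H3 e m0 by (intro mult_left_mono) auto
    ultimately show ?thesis by linarith
  qed
  also have "\<dots> = - \<eta> * real m * ln (real n / real m) + (u * ln 2 + \<eta> * ln (2 * u)) * real m"
    unfolding H4 by (simp add: algebra_simps)
  also have "\<dots> \<le> - \<eta> * real m * ln (real n / real m) + (u * ln 2 + \<eta> * \<bar>ln (2 * u)\<bar> + 1) * real m"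
  proof -
    have "\<eta> * ln (2 * u) \<le> \<eta> * \<bar>ln (2 * u)\<bar>" using e by (intro mult_left_mono) auto
    hence "u * ln 2 + \<eta> * ln (2 * u) \<le> u * ln 2 + \<eta> * \<bar>ln (2 * u)\<bar> + 1" by linarith
    thus ?thesis using m0 by (intro add_left_mono mult_right_mono) auto
  qed
  finally show ?thesis using eq by simp
qed

theorem lemma3:
  shows "\<exists>\<beta> :: real \<Rightarrow> real \<Rightarrow> real.
    (\<forall>u \<eta>. 0 < u \<and> 0 < \<eta> \<and> \<eta> < u \<longrightarrow>
       0 < \<beta> u \<eta> \<and>
       (\<exists>\<Delta>\<^sub>2 > 0. \<forall>\<^sub>F n in sequentially. \<forall>m :: nat. real m < \<beta> u \<eta> * real n \<longrightarrow>
          measure_pmf.prob (sumT_pmf n (nat \<lfloor>(u - \<eta>) * real m\<rfloor>)) {s. real s > u * real m}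
            \<le> exp (- \<eta> * real m * ln (real n / real m) + \<Delta>\<^sub>2 * real m))) \<and>
    (\<forall>u > 0. ((\<beta> u) \<longlongrightarrow> 0) (at_right 0) \<and>
       (\<forall>\<eta>1 \<eta>2. 0 < \<eta>1 \<and> \<eta>1 \<le> \<eta>2 \<and> \<eta>2 < u \<longrightarrow> \<beta> u \<eta>1 \<le> \<beta> u \<eta>2)) \<and>
    (\<forall>\<eta> > 0. \<forall>u1 u2. \<eta> < u1 \<and> u1 \<le> u2 \<longrightarrow> \<beta> u2 \<eta> \<le> \<beta> u1 \<eta>)"
proof (intro exI[of _ "\<lambda>u \<eta>. \<eta> / (2 * u * u)"] conjI allI impI)
  fix u \<eta> :: real
  assume ue: "0 < u \<and> 0 < \<eta> \<and> \<eta> < u"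
  hence u: "0 < u" and e: "0 < \<eta>" "\<eta> < u" by auto
  show "0 < \<eta> / (2 * u * u)" using u e by simp
  define D where "D = u * ln 2 + \<eta> * \<bar>ln (2 * u)\<bar> + 1"
  have D0: "0 < D" unfolding D_def using u e by (intro add_nonneg_pos add_nonneg_nonneg) auto
  show "\<exists>\<Delta>\<^sub>2 > 0. \<forall>\<^sub>F n in sequentially. \<forall>m :: nat. real m < \<eta> / (2 * u * u) * real n \<longrightarrow>
          measure_pmf.prob (sumT_pmf n (nat \<lfloor>(u - \<eta>) * real m\<rfloor>)) {s. real s > u * real m}
            \<le> exp (- \<eta> * real m * ln (real n / real m) + \<Delta>\<^sub>2 * real m)"
  proof (intro exI[of _ D] conjI D0 always_eventually allI impI)
    fix n m :: nat
    assume mn: "real m < \<eta> / (2 * u * u) * real n"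
    define k where "k = nat \<lfloor>(u - \<eta>) * real m\<rfloor>"
    have um0: "0 \<le> u * real m" using u by simp
    show "measure_pmf.prob (sumT_pmf n (nat \<lfloor>(u - \<eta>) * real m\<rfloor>)) {s. real s > u * real m}
            \<le> exp (- \<eta> * real m * ln (real n / real m) + D * real m)"
    proof (cases "k = 0")
      case True
      hence "sumT_pmf n (nat \<lfloor>(u - \<eta>) * real m\<rfloor>) = return_pmf 0"
        unfolding k_def[symmetric] by (simp add: sumT_pmf_def)
      hence "measure_pmf.prob (sumT_pmf n (nat \<lfloor>(u - \<eta>) * real m\<rfloor>)) {s. real s > u * real m} = 0"
        using um0 by (simp add: measure_return)
      thus ?thesis by simp
    next
      case False
      hence k1: "1 \<le> k" by simp
      have fl: "0 \<le> \<lfloor>(u - \<eta>) * real m\<rfloor>" using k1 unfolding k_def by linarith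
      have kle: "real k \<le> (u - \<eta>) * real m"
        unfolding k_def using fl by (simp add: of_nat_nat)
      have "(u - \<eta>) * real m \<le> u * real m" using e by (intro mult_right_mono) auto
      hence "real k \<le> u * real m" using kle by linarith
      also have "\<dots> \<le> u * (\<eta> / (2 * u * u) * real n)" using mn u by (intro mult_left_mono) auto
      also have "\<dots> = (\<eta> / u) * real n / 2" using u by (simp add: field_simps)
      also have "\<dots> < real n / 2"
      proof -
        have "real n > 0"
        proof (rule ccontr)
          assume "\<not> real n > 0" hence "real n = 0" by simp
          thus False using mn by simp
        qed
        moreover have "\<eta> / u < 1" using u e by simp
        ultimately have "(\<eta> / u) * real n < 1 * real n" by (intro mult_strict_right_mono)
        from divide_strict_right_mono[OF this, of 2] show ?thesis by simp
      qed
      finally have "real (2 * k) < real n" by simp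
      hence k2: "2 * k < n" by linarith
      define z where "z = real n / (2 * real k)"
      have "measure_pmf.prob (sumT_pmf n k) {s. real s > u * real m} \<le> (2 * z) ^ k / z powr (u * real m)"
        by (rule sumT_tail[OF k1 k2 z_def um0])
      also have "\<dots> \<le> exp (- \<eta> * real m * ln (real n / real m) + D * real m)"
        unfolding D_def by (rule real_bound[OF e k1 k2 kle z_def])
      finally show ?thesis unfolding k_def .
    qed
  qed
next
  fix u :: real assume u: "0 < u"
  have "((\<lambda>\<eta>. \<eta> / (2 * u * u)) \<longlongrightarrow> 0 / (2 * u * u)) (at_right 0)"
    using u by (intro tendsto_intros) auto
  thus "((\<lambda>\<eta>. \<eta> / (2 * u * u)) \<longlongrightarrow> 0) (at_right 0)" by simp
next
  fix u \<eta>1 \<eta>2 :: real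
  assume "0 < u" "0 < \<eta>1 \<and> \<eta>1 \<le> \<eta>2 \<and> \<eta>2 < u"
  thus "\<eta>1 / (2 * u * u) \<le> \<eta>2 / (2 * u * u)" by (intro divide_right_mono) auto
next
  fix \<eta> u1 u2 :: real
  assume a: "0 < \<eta>" "\<eta> < u1 \<and> u1 \<le> u2"
  have "2 * u1 * u1 \<le> 2 * u2 * u2" using a by (intro mult_mono) auto
  thus "\<eta> / (2 * u2 * u2) \<le> \<eta> / (2 * u1 * u1)" using a by (intro divide_left_mono) auto
qed

end
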